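(* If $\mathcal{S}\in\mathscr{W}$ is $C^4$-smooth and has isolated umbilic points at its poles, then the umbilic slopes $\mu_0,\mu_\pi$ of $\mathcal{S}$ are greater than or equal to $3$.
   Context: $\mathscr{W}$ is the set of embedded $C^2$-smooth topological 2-spheres in $\mathbb{R}^3$ that are rotationally symmetric and strictly convex. A surface in $\mathscr{W}$ is parametrised by the inverse Gauss map with $\theta\in[0,\pi]$ the angle between the outward normal and the symmetry axis ($\theta=0,\pi$ are the poles). With support function $r(\theta)=\vec X\cdot\hat n$, the radii of curvature are $r_1=\frac{\cos^2\theta}{\sin\theta}\frac{d}{d\theta}\left(\frac{r}{\cos\theta}\right)$, $r_2=r''+r$, and the astigmatism is $s=r_2-r_1$; umbilic points are where $s=0$. The umbilic slopes are $\mu_0=\lim_{\theta\to0}\frac{r_2(\theta)-r_2(0)}{r_1(\theta)-r_1(0)}$ and $\mu_\pi=\lim_{\theta\to\pi}\frac{r_2(\theta)-r_2(\pi)}{r_1(\theta)-r_1(\pi)}$. *)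

theory Defs
  imports "HOL-Analysis.Analysis" "HOL-Library.Extended_Real"
begin

text \<open>A surface S in the class W is described, as in the paper, through its support
  function r(theta) = X . n, where theta is the angle between the outward normal n and
  the symmetry axis (theta = 0 and theta = pi are the poles).  r is taken as a function
  on the whole real line: it is the restriction of the support function of S to a
  meridian great circle of the unit sphere of normals, so it is even about 0 and about pi.\<close>

definition Ck_real :: "nat \<Rightarrow> (real \<Rightarrow> real) \<Rightarrow> bool" where
  "Ck_real k f \<longleftrightarrow>
     (\<forall>j<k. \<forall>x. ((deriv ^^ j) f) differentiable (at x)) \<and>
     continuous_on UNIV ((deriv ^^ k) f)"

text \<open>For 0 < theta < pi the paper's formula
  cos^2 theta / sin theta * d/dtheta (r / cos theta) equals r + r' cos theta / sin theta
  (the latter form is also meaningful at theta = pi/2); at the poles r1 is the limiting value.\<close>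
definition radius1_inner :: "(real \<Rightarrow> real) \<Rightarrow> real \<Rightarrow> real" where
  "radius1_inner r \<theta> = r \<theta> + deriv r \<theta> * cos \<theta> / sin \<theta>"

definition radius1 :: "(real \<Rightarrow> real) \<Rightarrow> real \<Rightarrow> real" where
  "radius1 r \<theta> =
     (if \<theta> = 0 then Lim (at_right 0) (radius1_inner r)
      else if \<theta> = pi then Lim (at_left pi) (radius1_inner r)
      else radius1_inner r \<theta>)"

definition radius2 :: "(real \<Rightarrow> real) \<Rightarrow> real \<Rightarrow> real" where
  "radius2 r \<theta> = deriv (deriv r) \<theta> + r \<theta>"

definition astigmatism :: "(real \<Rightarrow> real) \<Rightarrow> real \<Rightarrow> real" where
  "astigmatism r \<theta> = radius2 r \<theta> - radius1 r \<theta>"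

text \<open>Support functions of surfaces in W (rotationally symmetric, strictly convex, embedded
  C^2 spheres) that are moreover C^k smooth: smoothness of the support function along a
  meridian great circle (evenness about both poles), and positive finite radii of
  curvature on [0, pi] (strict convexity), with r1 extending continuously to the poles.\<close>
definition W_support_Ck :: "nat \<Rightarrow> (real \<Rightarrow> real) \<Rightarrow> bool" where
  "W_support_Ck k r \<longleftrightarrow>
     Ck_real k r \<and>
     (\<forall>\<theta>. r (- \<theta>) = r \<theta>) \<and>
     (\<forall>\<theta>. r (pi + \<theta>) = r (pi - \<theta>)) \<and>
     (radius1_inner r \<longlongrightarrow> radius1 r 0) (at_right 0) \<and>
     (radius1_inner r \<longlongrightarrow> radius1 r pi) (at_left pi) \<and>
     (\<forall>\<theta>\<in>{0..pi}. radius1 r \<theta> > 0 \<and> radius2 r \<theta> > 0)"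

definition isolated_umbilic_at_0 :: "(real \<Rightarrow> real) \<Rightarrow> bool" where
  "isolated_umbilic_at_0 r \<longleftrightarrow> astigmatism r 0 = 0 \<and>
     (\<exists>\<epsilon>>0. \<forall>\<theta>. 0 < \<theta> \<and> \<theta> < \<epsilon> \<longrightarrow> astigmatism r \<theta> \<noteq> 0)"

definition isolated_umbilic_at_pi :: "(real \<Rightarrow> real) \<Rightarrow> bool" where
  "isolated_umbilic_at_pi r \<longleftrightarrow> astigmatism r pi = 0 \<and>
     (\<exists>\<epsilon>>0. \<forall>\<theta>. pi - \<epsilon> < \<theta> \<and> \<theta> < pi \<longrightarrow> astigmatism r \<theta> \<noteq> 0)"

text \<open>The difference quotient whose limit is the umbilic slope at a pole p.\<close>
definition slope_quotient :: "(real \<Rightarrow> real) \<Rightarrow> real \<Rightarrow> real \<Rightarrow> real" where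
  "slope_quotient r p \<theta> =
     (radius2 r \<theta> - radius2 r p) / (radius1 r \<theta> - radius1 r p)"

end

theory Submission
  imports Defs
begin


lemma parity_deriv:
  fixes f f' :: "real \<Rightarrow> real"
  assumes "\<forall>x. f (-x) = c * f x" "\<forall>x. (f has_real_derivative f' x) (at x)"
  shows "f' (-x) = - c * f' x"
proof -
  have "((\<lambda>x. f (-x)) has_real_derivative f' (-x) * (-1)) (at x)"
    by (rule DERIV_chain2[of f]) (use assms(2) in \<open>auto intro!: derivative_eq_intros\<close>)
  moreover have "(\<lambda>x. f (-x)) = (\<lambda>x. c * f x)" using assms(1) by auto
  moreover have "((\<lambda>x. c * f x) has_real_derivative c * f' x) (at x)"
    using assms(2) by (auto intro!: derivative_eq_intros)
  ultimately have "f' (-x) * (-1) = c * f' x" using DERIV_unique by metis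
  then show ?thesis by simp
qed

lemma trig1:
  fixes t :: real assumes "0 \<le> t" "t \<le> pi"
  shows "t * cos t \<le> sin t"
proof -
  have "(\<lambda>t. sin t - t * cos t) 0 \<le> (\<lambda>t. sin t - t * cos t) t"
  proof (rule DERIV_nonneg_imp_nondecreasing[OF assms(1)])
    fix x assume x: "0 \<le> x" "x \<le> t"
    show "\<exists>y. ((\<lambda>t. sin t - t * cos t) has_real_derivative y) (at x) \<and> y \<ge> 0"
      using x assms sin_ge_zero[of x] by (intro exI[of _ "x * sin x"]) (auto intro!: derivative_eq_intros)
  qed
  then show ?thesis by simp
qed

lemma trig2:
  fixes t :: real assumes "0 \<le> t" "t \<le> 1"
  shows "sin t - t * cos t \<le> t^2 * sin t"
proof -
  have pi2: "1 \<le> pi/2" using pi_gt3 by linarith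
  have "(\<lambda>t. t^2 * sin t - sin t + t * cos t) 0 \<le> (\<lambda>t. t^2 * sin t - sin t + t * cos t) t"
  proof (rule DERIV_nonneg_imp_nondecreasing[OF assms(1)])
    fix x assume x: "0 \<le> x" "x \<le> t"
    have "0 \<le> sin x" using x assms pi_gt3 by (intro sin_ge_zero) auto
    moreover have "0 \<le> cos x" using x assms pi2 by (intro cos_ge_zero) auto
    ultimately have "0 \<le> x * sin x + x^2 * cos x" using x by auto
    then show "\<exists>y. ((\<lambda>t. t^2 * sin t - sin t + t * cos t) has_real_derivative y) (at x) \<and> y \<ge> 0"
      by (intro exI[of _ "x * sin x + x^2 * cos x"]) (auto intro!: derivative_eq_intros simp: algebra_simps power2_eq_square)
  qed
  then show ?thesis by simp
qed

lemma trig3: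
  fixes t :: real assumes "0 < t" "t \<le> 1"
  shows "sin t > 0" "cos t > 0" "cos t / sin t \<le> 1 / t" "\<bar>1/t - cos t / sin t\<bar> \<le> t"
proof -
  have pi2: "1 < pi/2" using pi_gt3 by linarith
  show s: "sin t > 0" using assms pi_gt3 by (intro sin_gt_zero) auto
  show "cos t > 0" using assms pi2 by (intro cos_gt_zero) auto
  have a: "t * cos t \<le> sin t" using trig1[of t] assms pi_gt3 by auto
  have b: "sin t - t * cos t \<le> t^2 * sin t" using trig2[of t] assms by auto
  show "cos t / sin t \<le> 1 / t" using a s assms by (simp add: field_simps)
  have "1/t - cos t / sin t = (sin t - t * cos t) / (t * sin t)" using s assms by (simp add: field_simps)
  also have "\<bar>\<dots>\<bar> \<le> t" using a b s assms by (simp add: field_simps power2_eq_square)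
  finally show "\<bar>1/t - cos t / sin t\<bar> \<le> t" .
qed

lemma mvt0:
  fixes f f' :: "real \<Rightarrow> real"
  assumes "\<forall>x. (f has_real_derivative f' x) (at x)" "0 < t"
  shows "\<exists>z. 0 < z \<and> z < t \<and> f t - f 0 = f' z * t"
proof -
  have "continuous_on {0..t} f" using assms(1)
    by (meson DERIV_isCont continuous_at_imp_continuous_on)
  moreover have "\<And>x. f differentiable (at x)" using assms(1) real_differentiable_def by blast
  ultimately obtain l z where "0 < z" "z < t" "DERIV f z :> l" "f t - f 0 = (t - 0) * l"
    using MVT[OF assms(2), of f] by blast
  then show ?thesis using assms(1) DERIV_unique by (metis diff_zero mult.commute)
qed


lemma growth:
  fixes J D :: "real \<Rightarrow> real"
  assumes th: "0 < \<theta>1" and a: "a < 2"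
  and pos: "\<forall>t. 0<t \<and> t<\<theta>1 \<longrightarrow> J t > 0"
  and der: "\<forall>t. 0<t \<and> t<\<theta>1 \<longrightarrow> (J has_real_derivative D t) (at t)"
  and le: "\<forall>t. 0<t \<and> t<\<theta>1 \<longrightarrow> D t \<le> a * J t / t"
  and bd: "\<forall>t. 0<t \<and> t<\<theta>1 \<longrightarrow> J t \<le> K * t^2"
  shows False
proof -
  define t0 where "t0 = \<theta>1 / 2"
  have t0: "0 < t0" "t0 < \<theta>1" using th by (auto simp: t0_def)
  define g where "g t = ln (J t) - a * ln t" for t
  define c where "c = exp (g t0)"
  have c: "c > 0" by (simp add: c_def)
  have key: "c \<le> K * t powr (2 - a)" if t: "0 < t" "t \<le> t0" for t
  proof -
    have "g t0 \<le> g t"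
    proof (rule DERIV_nonpos_imp_nonincreasing[OF t(2)])
      fix x assume x: "t \<le> x" "x \<le> t0"
      then have x0: "0 < x" "x < \<theta>1" using t t0 by auto
      have Jx: "J x > 0" using pos x0 by auto
      have "D x \<le> a * J x / x" using le x0 by auto
      then have "D x / J x \<le> a / x" using Jx x0 by (simp add: field_simps)
      moreover have "(g has_real_derivative D x / J x - a * (1 / x)) (at x)"
        unfolding g_def using der x0 Jx by (auto intro!: derivative_eq_intros)
      ultimately show "\<exists>y. (g has_real_derivative y) (at x) \<and> y \<le> 0" by fastforce
    qed
    then have "ln (J t) \<ge> g t0 + a * ln t" unfolding g_def by simp
    then have "exp (ln (J t)) \<ge> exp (g t0 + a * ln t)" by simp
    then have "J t \<ge> c * t powr a" using pos t t0 by (simp add: c_def exp_add powr_def mult.commute)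
    then have "c * t powr a \<le> K * t^2" using bd t t0 by force
    also have "t^2 = t powr a * t powr (2 - a)" using t by (simp add: powr_add[symmetric] powr_numeral)
    finally have "c * t powr a \<le> (K * t powr (2 - a)) * t powr a" by (simp add: algebra_simps)
    then show ?thesis using t by simp
  qed
  have "((\<lambda>t. K * t powr (2 - a)) \<longlongrightarrow> K * 0) (at_right 0)"
    by (intro tendsto_mult tendsto_const tendsto_zero_powrI)
       (use a in \<open>auto simp: eventually_at_right_field intro!: tendsto_ident_at exI[of _ 1]\<close>)
  then have "eventually (\<lambda>t. K * t powr (2 - a) < c) (at_right 0)"
    using c by (simp add: order_tendsto_iff)
  moreover have "eventually (\<lambda>t. 0 < t \<and> t \<le> t0) (at_right (0::real))"
    using t0 by (auto simp: eventually_at_right_field intro!: exI[of _ t0])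
  ultimately have "eventually (\<lambda>t. False) (at_right (0::real))"
    by eventually_elim (use key in force)
  then show False by simp
qed


lemma mvt_gen:
  fixes f f' :: "real \<Rightarrow> real"
  assumes "\<forall>x. (f has_real_derivative f' x) (at x)" "a < b"
  shows "\<exists>z. a < z \<and> z < b \<and> f b - f a = f' z * (b - a)"
proof -
  have "continuous_on {a..b} f" using assms(1)
    by (meson DERIV_isCont continuous_at_imp_continuous_on)
  moreover have "\<And>x. f differentiable (at x)" using assms(1) real_differentiable_def by blast
  ultimately obtain l z where "a < z" "z < b" "DERIV f z :> l" "f b - f a = (b - a) * l"
    using MVT[OF assms(2), of f] by blast
  then show ?thesis using assms(1) DERIV_unique by (metis mult.commute)
qed

lemma bound01:
  fixes f :: "real \<Rightarrow> real"
  assumes "continuous_on {0..1} f"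
  obtains M where "M > 0" "\<forall>x\<in>{0..1}. \<bar>f x\<bar> \<le> M"
proof -
  have "bounded (f ` {0..1})" by (intro compact_imp_bounded compact_continuous_image assms) auto
  then show ?thesis using that unfolding bounded_pos by auto
qed

lemma sign_const:
  fixes f :: "real \<Rightarrow> real"
  assumes "\<And>x. a < x \<Longrightarrow> x < b \<Longrightarrow> isCont f x"
    and "\<And>x. a < x \<Longrightarrow> x < b \<Longrightarrow> f x \<noteq> 0"
    and "a < x" "x < b" "a < y" "y < b" "f x > 0"
  shows "f y > 0"
proof (rule ccontr)
  assume "\<not> f y > 0"
  then have fy: "f y \<le> 0" by simp
  consider "x \<le> y" | "y \<le> x" by linarith
  then show False
  proof cases
    case 1
    have "continuous_on {x..y} f" using assms by (intro continuous_at_imp_continuous_on) auto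
    then obtain z where "x \<le> z" "z \<le> y" "f z = 0" using IVT2'[of f y 0 x] fy assms(7) 1 by force
    then show False using assms by force
  next
    case 2
    have "continuous_on {y..x} f" using assms by (intro continuous_at_imp_continuous_on) auto
    then obtain z where "y \<le> z" "z \<le> x" "f z = 0" using IVT'[of f y 0 x] fy assms(7) 2 by force
    then show False using assms by force
  qed
qed


lemma core:
  fixes d0 d1 d2 d3 d4 R1 R2 :: "real \<Rightarrow> real"
  assumes D0: "\<forall>x. (d0 has_real_derivative d1 x) (at x)"
    and D1: "\<forall>x. (d1 has_real_derivative d2 x) (at x)"
    and D2: "\<forall>x. (d2 has_real_derivative d3 x) (at x)"
    and D3: "\<forall>x. (d3 has_real_derivative d4 x) (at x)"
    and C4: "continuous_on UNIV d4"
    and ev: "\<forall>x. d0 (-x) = d0 x"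
    and R1: "\<forall>u. 0<u \<and> u<pi \<longrightarrow> R1 u = d0 u + d1 u * cos u / sin u"
    and R2: "\<forall>u. 0<u \<and> u<pi \<longrightarrow> R2 u = d2 u + d0 u"
    and lim: "(R1 \<longlongrightarrow> R1 0) (at_right 0)"
    and um: "R2 0 = R1 0"
    and iso: "\<exists>\<epsilon>>0. \<forall>u. 0<u \<and> u<\<epsilon> \<longrightarrow> R2 u - R1 u \<noteq> 0"
  shows "\<forall>\<mu>::ereal. ((\<lambda>u. ereal ((R2 u - R2 0) / (R1 u - R1 0))) \<longlongrightarrow> \<mu>) (at_right 0) \<longrightarrow> \<mu> \<ge> 3"
proof -
  have pi1: "1 < pi" using pi_gt3 by linarith
  have p1: "\<forall>x. d1 (-x) = - d1 x" using parity_deriv[of d0 1 d1] ev D0 by simp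
  have p2: "\<forall>x. d2 (-x) = d2 x" using parity_deriv[of d1 "-1" d2] p1 D1 by simp
  have p3: "\<forall>x. d3 (-x) = - d3 x" using parity_deriv[of d2 1 d3] p2 D2 by simp
  have d10: "d1 0 = 0" using p1[rule_format, of 0] by simp
  have d30: "d3 0 = 0" using p3[rule_format, of 0] by simp
  obtain M4 where M4: "M4 > 0" "\<forall>x\<in>{0..1}. \<bar>d4 x\<bar> \<le> M4"
    using bound01[of d4] C4 continuous_on_subset by blast
  have cd2: "continuous_on {0..1} d2" using D2
    by (meson DERIV_isCont continuous_at_imp_continuous_on)
  obtain M2 where M2: "M2 > 0" "\<forall>x\<in>{0..1}. \<bar>d2 x\<bar> \<le> M2"
    using bound01[OF cd2] by blast
  have b3: "\<bar>d3 t\<bar> \<le> M4 * t" if t: "0 < t" "t \<le> 1" for t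
  proof -
    obtain z where z: "0 < z" "z < t" "d3 t - d3 0 = d4 z * t" using mvt0[OF D3 t(1)] by blast
    have "\<bar>d4 z\<bar> \<le> M4" using M4 z t by auto
    then show ?thesis using z d30 t by (simp add: abs_mult mult_right_mono)
  qed
  have b1: "\<bar>d1 t\<bar> \<le> M2 * t" if t: "0 < t" "t \<le> 1" for t
  proof -
    obtain z where z: "0 < z" "z < t" "d1 t - d1 0 = d2 z * t" using mvt0[OF D1 t(1)] by blast
    have "\<bar>d2 z\<bar> \<le> M2" using M2 z t by auto
    then show ?thesis using z d10 t by (simp add: abs_mult mult_right_mono)
  qed
  have bs: "\<bar>d2 t - d1 t / t\<bar> \<le> M4 * t^2" if t: "0 < t" "t \<le> 1" for t
  proof -
    obtain z where z: "0 < z" "z < t" "d1 t - d1 0 = d2 z * t" using mvt0[OF D1 t(1)] by blast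
    have e1: "d1 t / t = d2 z" using z d10 t by simp
    obtain w where w: "z < w" "w < t" "d2 t - d2 z = d3 w * (t - z)" using mvt_gen[OF D2 z(2)] by blast
    have "\<bar>d3 w\<bar> \<le> M4 * w" using b3[of w] w z t by auto
    also have "\<dots> \<le> M4 * t" using M4 w by simp
    finally have "\<bar>d3 w\<bar> * (t - z) \<le> M4 * t * t" using z t
      by (intro mult_mono) auto
    then show ?thesis using e1 w z by (simp add: abs_mult power2_eq_square)
  qed
  define S where "S u = d2 u - d1 u * cos u / sin u" for u
  define K where "K = M4 + M2"
  have Sb: "\<bar>S t\<bar> \<le> K * t^2" if t: "0 < t" "t \<le> 1" for t
  proof -
    have "S t = (d2 t - d1 t / t) + d1 t * (1/t - cos t / sin t)" unfolding S_def
      by (simp add: algebra_simps)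
    also have "\<bar>\<dots>\<bar> \<le> M4 * t^2 + M2 * t * t"
    proof -
      have "\<bar>d1 t * (1/t - cos t / sin t)\<bar> \<le> M2 * t * t"
        unfolding abs_mult using b1[OF t] trig3(4)[OF t] by (intro mult_mono) auto
      then show ?thesis using bs[OF t] by linarith
    qed
    finally show ?thesis by (simp add: K_def algebra_simps power2_eq_square)
  qed
  have RS: "R2 u - R1 u = S u" if "0 < u" "u < pi" for u
    using R1 R2 that by (simp add: S_def)
  obtain \<epsilon> where \<epsilon>: "\<epsilon> > 0" "\<forall>u. 0<u \<and> u<\<epsilon> \<longrightarrow> R2 u - R1 u \<noteq> 0" using iso by blast
  define \<theta>0 where "\<theta>0 = min \<epsilon> 1"
  have th0: "0 < \<theta>0" "\<theta>0 \<le> 1" "\<theta>0 \<le> \<epsilon>" using \<epsilon> by (auto simp: \<theta>0_def)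
  have Snz: "S u \<noteq> 0" if "0 < u" "u < \<theta>0" for u
    using RS[of u] \<epsilon> that th0 pi1 by auto
  have Scont: "isCont S u" if "0 < u" "u < \<theta>0" for u
  proof -
    have "sin u > 0" using trig3(1)[of u] that th0 by auto
    then show ?thesis unfolding S_def using that D2 D1 D0
      by (intro continuous_intros) (auto intro: DERIV_isCont)
  qed
  obtain \<sigma> :: real where \<sigma>: "\<sigma> = 1 \<or> \<sigma> = -1" "\<forall>u. 0 < u \<and> u < \<theta>0 \<longrightarrow> \<sigma> * S u > 0"
  proof -
    define u0 where "u0 = \<theta>0 / 2"
    have u0: "0 < u0" "u0 < \<theta>0" using th0 by (auto simp: u0_def)
    show ?thesis
    proof (cases "S u0 > 0")
      case True
      show ?thesis
        by (rule that[of 1]) (use sign_const[of 0 \<theta>0 S u0] Scont Snz True u0 in auto)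
    next
      case False
      then have "(\<lambda>u. - S u) u0 > 0" using Snz[OF u0] by simp
      moreover have "\<And>x. 0 < x \<Longrightarrow> x < \<theta>0 \<Longrightarrow> isCont (\<lambda>u. - S u) x" using Scont by (auto intro: continuous_intros)
      ultimately show ?thesis
        by (intro that[of "-1"]) (use sign_const[of 0 \<theta>0 "\<lambda>u. - S u" u0] Snz u0 in auto)
    qed
  qed
  have \<sigma>2: "\<sigma> * \<sigma> = 1" using \<sigma>(1) by auto
  define J where "J u = \<sigma> * (R1 u - R1 0)" for u
  define D where "D u = \<sigma> * (S u * cos u / sin u)" for u
  have derR1: "(R1 has_real_derivative S u * cos u / sin u) (at u)" if u: "0 < u" "u < pi" for u
  proof -
    have su: "sin u \<noteq> 0" using u sin_gt_zero by force
    have "((\<lambda>u. d0 u + d1 u * cos u / sin u) has_real_derivative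
           d1 u + ((d2 u * cos u + d1 u * (- sin u)) * sin u - d1 u * cos u * cos u) / (sin u * sin u)) (at u)"
      using D0 D1 su by (auto intro!: derivative_eq_intros)
    also have "d1 u + ((d2 u * cos u + d1 u * (- sin u)) * sin u - d1 u * cos u * cos u) / (sin u * sin u)
               = S u * cos u / sin u"
    proof -
      have c2: "cos u * cos u = 1 - sin u * sin u" using sin_cos_squared_add[of u] by (simp add: power2_eq_square)
      show ?thesis unfolding S_def using su
        by (simp add: field_simps)
    qed
    finally show ?thesis
      by (rule has_field_derivative_transform_within_open[where S="{0<..<pi}"]) (use u R1 in auto)
  qed
  have derJ: "(J has_real_derivative D u) (at u)" if "0 < u" "u < pi" for u
    unfolding J_def D_def using derR1[OF that] by (auto intro!: derivative_eq_intros)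
  have mvtJ: "\<exists>z. 0 < z \<and> z < t \<and> J t = D z * t" if t: "0 < t" "t < \<theta>0" for t
  proof -
    have "continuous_on {0..t} J"
    proof (rule continuous_on_IccI)
      have "((\<lambda>u. \<sigma> * (R1 u - R1 0)) \<longlongrightarrow> \<sigma> * (R1 0 - R1 0)) (at_right 0)"
        by (intro tendsto_intros lim)
      then show "(J \<longlongrightarrow> J 0) (at_right 0)" unfolding J_def by simp
      have "t < pi" using t th0 pi1 by linarith
      then have "J \<midarrow>t\<rightarrow> J t" using derJ[of t] t DERIV_isCont isCont_def by blast
      then show "(J \<longlongrightarrow> J t) (at_left t)" by (simp add: filterlim_at_split)
      show "J \<midarrow>x\<rightarrow> J x" if "0 < x" "x < t" for x
      proof -
        have "x < pi" using that t th0 pi1 by linarith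
        then show ?thesis using derJ[of x] that DERIV_isCont isCont_def by blast
      qed
    qed (use t in auto)
    moreover have "J differentiable (at x)" if "0 < x" "x < t" for x
    proof -
      have "x < pi" using that t th0 pi1 by linarith
      then show ?thesis using derJ[of x] that real_differentiable_def by blast
    qed
    ultimately obtain l z where z: "0 < z" "z < t" "DERIV J z :> l" "J t - J 0 = (t - 0) * l"
      using MVT[OF t(1), of J] by blast
    have "l = D z" using DERIV_unique[OF z(3) derJ[of z]] z t th0 pi1 by auto
    then show ?thesis using z by (auto simp: J_def)
  qed
  have Jpos: "J t > 0" and Jbd: "J t \<le> K * t^2" if t: "0 < t" "t < \<theta>0" for t
  proof -
    obtain z where z: "0 < z" "z < t" "J t = D z * t" using mvtJ[OF t] by blast
    have z1: "0 < z" "z \<le> 1" using z t th0 by auto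
    have sz: "\<sigma> * S z > 0" using \<sigma>(2) z t by auto
    have cz: "cos z / sin z > 0" using trig3(1,2)[OF z1] by simp
    have Dz: "D z = (\<sigma> * S z) * (cos z / sin z)" by (simp add: D_def)
    have "D z > 0" unfolding Dz using sz cz by (rule mult_pos_pos)
    then show "J t > 0" using z by simp
    have "D z \<le> \<bar>S z\<bar> * (1 / z)"
    proof -
      have "\<sigma> * S z \<le> \<bar>S z\<bar>" using \<sigma>(1) by auto
      then have "D z \<le> \<bar>S z\<bar> * (cos z / sin z)" unfolding Dz using cz by (intro mult_right_mono) auto
      also have "\<dots> \<le> \<bar>S z\<bar> * (1 / z)" using trig3(3)[OF z1] by (intro mult_left_mono) auto
      finally show ?thesis .
    qed
    also have "\<dots> \<le> K * z^2 * (1 / z)" using Sb[OF z1] z by (intro mult_right_mono) auto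
    also have "\<dots> = K * z" using z by (simp add: power2_eq_square)
    also have "\<dots> \<le> K * t" using z M4 M2 by (simp add: K_def)
    finally show "J t \<le> K * t^2" using z t by (simp add: power2_eq_square mult_right_mono)
  qed
  show ?thesis
  proof (intro allI impI)
    fix \<mu> :: ereal
    assume lm: "((\<lambda>u. ereal ((R2 u - R2 0) / (R1 u - R1 0))) \<longlongrightarrow> \<mu>) (at_right 0)"
    show "\<mu> \<ge> 3"
    proof (rule ccontr)
      assume "\<not> \<mu> \<ge> 3"
      then have "\<mu> < ereal 3" by simp
      then obtain m where m: "\<mu> < ereal m" "ereal m < ereal 3" using ereal_dense2 by blast
      have "eventually (\<lambda>u. ereal ((R2 u - R2 0) / (R1 u - R1 0)) < ereal m) (at_right 0)"
        using lm m(1) unfolding order_tendsto_iff by blast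
      moreover have "eventually (\<lambda>u. 0 < u \<and> u < \<theta>0) (at_right (0::real))"
        using th0 by (auto simp: eventually_at_right_field intro!: exI[of _ \<theta>0])
      ultimately have "eventually (\<lambda>u. (R2 u - R2 0) / (R1 u - R1 0) < m \<and> 0 < u \<and> u < \<theta>0) (at_right 0)"
        by eventually_elim auto
      then obtain b where b: "b > 0" "\<forall>y>0. y < b \<longrightarrow> (R2 y - R2 0) / (R1 y - R1 0) < m \<and> 0 < y \<and> y < \<theta>0"
        unfolding eventually_at_right_field by auto
      show False
      proof (rule growth[of b "m - 1" J D K])
        show "0 < b" by fact
        show "m - 1 < 2" using m by simp
        show "\<forall>t. 0 < t \<and> t < b \<longrightarrow> 0 < J t" using b Jpos by blast
        show "\<forall>t. 0 < t \<and> t < b \<longrightarrow> (J has_real_derivative D t) (at t)" using b derJ th0 pi1 by force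
        show "\<forall>t. 0 < t \<and> t < b \<longrightarrow> J t \<le> K * t\<^sup>2" using b Jbd by blast
        show "\<forall>t. 0 < t \<and> t < b \<longrightarrow> D t \<le> (m - 1) * J t / t"
        proof (intro allI impI)
          fix t assume t: "0 < t \<and> t < b"
          have q: "(R2 t - R2 0) / (R1 t - R1 0) < m" and tt: "0 < t" "t < \<theta>0" using b t by auto
          have t1: "0 < t" "t \<le> 1" using tt th0 by auto
          have Jt: "J t > 0" using Jpos tt by auto
          have st: "\<sigma> * S t > 0" using \<sigma>(2) tt by auto
          have I: "R1 t - R1 0 = \<sigma> * J t" using \<sigma>2 by (simp add: J_def)
          have N: "R2 t - R2 0 = S t + \<sigma> * J t" using RS[of t] tt th0 pi1 um I by auto
          have "(R2 t - R2 0) / (R1 t - R1 0) = 1 + (\<sigma> * S t) / J t"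
            unfolding N I using Jt \<sigma>(1) by (auto simp: field_simps)
          then have "(\<sigma> * S t) / J t < m - 1" using q by simp
          then have lt: "\<sigma> * S t < (m - 1) * J t" using Jt by (simp add: field_simps)
          have "D t = (\<sigma> * S t) * (cos t / sin t)" by (simp add: D_def)
          also have "\<dots> \<le> ((m - 1) * J t) * (cos t / sin t)"
            using lt trig3(1,2)[OF t1] by (intro mult_right_mono) auto
          also have "\<dots> \<le> ((m - 1) * J t) * (1 / t)"
            using lt st trig3(3)[OF t1] by (intro mult_left_mono) auto
          finally show "D t \<le> (m - 1) * J t / t" by simp
        qed
      qed
    qed
  qed
qed


lemma left_pi:
  fixes f :: "real \<Rightarrow> 'b"
  assumes "filterlim f F (at_left pi)"
  shows "filterlim (\<lambda>u. f (pi - u)) F (at_right 0)"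
proof -
  have "filterlim (\<lambda>x. f (- x)) F (at_right (- pi))" by (rule filterlim_at_left_to_right[THEN iffD1, OF assms])
  then have "filterlim (\<lambda>x. f (- (x + - pi))) F (at_right 0)" by (rule filterlim_at_right_to_0[THEN iffD1])
  then show ?thesis by simp
qed

lemma refl_deriv:
  fixes f :: "real \<Rightarrow> real"
  assumes "\<forall>y. (f has_real_derivative f' y) (at y)"
  shows "((\<lambda>u. c * f (pi - u)) has_real_derivative - c * f' (pi - x)) (at x)"
proof -
  have g: "((\<lambda>u. pi - u) has_real_derivative -1) (at x)" by (auto intro!: derivative_eq_intros)
  have "((\<lambda>u. f (pi - u)) has_real_derivative f' (pi - x) * -1) (at x)"
    using DERIV_chain2[of f "f' (pi - x)" "\<lambda>u. pi - u" x "-1" UNIV] assms g by simp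
  then show ?thesis by (auto intro!: derivative_eq_intros)
qed

theorem proposition2p4:
  fixes r :: "real \<Rightarrow> real"
  assumes "W_support_Ck 4 r"
    and "isolated_umbilic_at_0 r"
    and "isolated_umbilic_at_pi r"
  shows "(\<forall>\<mu>0::ereal. ((\<lambda>\<theta>. ereal (slope_quotient r 0 \<theta>)) \<longlongrightarrow> \<mu>0) (at_right 0) \<longrightarrow> \<mu>0 \<ge> 3) \<and>
         (\<forall>\<mu>pi::ereal. ((\<lambda>\<theta>. ereal (slope_quotient r pi \<theta>)) \<longlongrightarrow> \<mu>pi) (at_left pi) \<longrightarrow> \<mu>pi \<ge> 3)"
proof -
  define d1 where "d1 = deriv r"
  define d2 where "d2 = deriv d1"
  define d3 where "d3 = deriv d2"
  define d4 where "d4 = deriv d3"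
  have W: "Ck_real 4 r" "\<forall>\<theta>. r (- \<theta>) = r \<theta>" "\<forall>\<theta>. r (pi + \<theta>) = r (pi - \<theta>)"
    "(radius1_inner r \<longlongrightarrow> radius1 r 0) (at_right 0)"
    "(radius1_inner r \<longlongrightarrow> radius1 r pi) (at_left pi)"
    using assms(1) unfolding W_support_Ck_def by auto
  have dd: "((deriv^^j) r has_real_derivative (deriv^^(Suc j)) r x) (at x)" if "j < 4" for j x
    using W(1) that unfolding Ck_real_def by (simp add: DERIV_deriv_iff_real_differentiable)
  have eqs: "(deriv^^0) r = r" "(deriv^^1) r = d1" "(deriv^^2) r = d2" "(deriv^^3) r = d3" "(deriv^^4) r = d4"
    by (simp_all add: d1_def d2_def d3_def d4_def numeral_eq_Suc)
  have D0: "\<forall>x. (r has_real_derivative d1 x) (at x)" using dd[of 0] by (simp add: d1_def d2_def d3_def d4_def numeral_eq_Suc)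
  have D1: "\<forall>x. (d1 has_real_derivative d2 x) (at x)" using dd[of 1] by (simp add: d1_def d2_def d3_def d4_def numeral_eq_Suc)
  have D2: "\<forall>x. (d2 has_real_derivative d3 x) (at x)" using dd[of 2] by (simp add: d1_def d2_def d3_def d4_def numeral_eq_Suc)
  have D3: "\<forall>x. (d3 has_real_derivative d4 x) (at x)" using dd[of 3] by (simp add: d1_def d2_def d3_def d4_def numeral_eq_Suc)
  have C4: "continuous_on UNIV d4" using W(1) eqs unfolding Ck_real_def by simp
  have R1in: "radius1 r u = r u + d1 u * cos u / sin u" if "0 < u" "u < pi" for u
    using that unfolding radius1_def radius1_inner_def d1_def by auto
  have R2e: "radius2 r u = d2 u + r u" for u
    unfolding radius2_def d2_def d1_def by simp
  have part0: "\<forall>\<mu>0::ereal. ((\<lambda>\<theta>. ereal (slope_quotient r 0 \<theta>)) \<longlongrightarrow> \<mu>0) (at_right 0) \<longrightarrow> \<mu>0 \<ge> 3"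
  proof -
    have lim: "(radius1 r \<longlongrightarrow> radius1 r 0) (at_right 0)"
    proof (rule Lim_transform_eventually[OF W(4)])
      show "\<forall>\<^sub>F x in at_right 0. radius1_inner r x = radius1 r x"
        using eventually_at_right_real[OF pi_gt_zero] by eventually_elim (auto simp: radius1_def)
    qed
    have "\<forall>\<mu>::ereal. ((\<lambda>u. ereal ((radius2 r u - radius2 r 0) / (radius1 r u - radius1 r 0))) \<longlongrightarrow> \<mu>) (at_right 0) \<longrightarrow> \<mu> \<ge> 3"
    proof (rule core[OF D0 D1 D2 D3 C4 W(2)])
      show "\<forall>u. 0 < u \<and> u < pi \<longrightarrow> radius1 r u = r u + d1 u * cos u / sin u" using R1in by blast
      show "\<forall>u. 0 < u \<and> u < pi \<longrightarrow> radius2 r u = d2 u + r u" using R2e by blast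
      show "(radius1 r \<longlongrightarrow> radius1 r 0) (at_right 0)" by fact
      show "radius2 r 0 = radius1 r 0" using assms(2) unfolding isolated_umbilic_at_0_def astigmatism_def by simp
      show "\<exists>\<epsilon>>0. \<forall>u. 0 < u \<and> u < \<epsilon> \<longrightarrow> radius2 r u - radius1 r u \<noteq> 0"
        using assms(2) unfolding isolated_umbilic_at_0_def astigmatism_def by blast
    qed
    then show ?thesis unfolding slope_quotient_def by blast
  qed
  have partpi: "\<forall>\<mu>pi::ereal. ((\<lambda>\<theta>. ereal (slope_quotient r pi \<theta>)) \<longlongrightarrow> \<mu>pi) (at_left pi) \<longrightarrow> \<mu>pi \<ge> 3"
  proof -
    define e0 where "e0 = (\<lambda>u. r (pi - u))"
    define e1 where "e1 = (\<lambda>u. - d1 (pi - u))"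
    define e2 where "e2 = (\<lambda>u. d2 (pi - u))"
    define e3 where "e3 = (\<lambda>u. - d3 (pi - u))"
    define e4 where "e4 = (\<lambda>u. d4 (pi - u))"
    define Q1 where "Q1 u = radius1 r (pi - u)" for u
    define Q2 where "Q2 u = radius2 r (pi - u)" for u
    have E0: "\<forall>x. (e0 has_real_derivative e1 x) (at x)"
    proof
      fix x show "(e0 has_real_derivative e1 x) (at x)"
        using refl_deriv[OF D0, of "1" x] by (simp add: e0_def e1_def)
    qed
    have E1: "\<forall>x. (e1 has_real_derivative e2 x) (at x)"
    proof
      fix x show "(e1 has_real_derivative e2 x) (at x)"
        using refl_deriv[OF D1, of "-1" x] by (simp add: e1_def e2_def)
    qed
    have E2: "\<forall>x. (e2 has_real_derivative e3 x) (at x)"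
    proof
      fix x show "(e2 has_real_derivative e3 x) (at x)"
        using refl_deriv[OF D2, of "1" x] by (simp add: e2_def e3_def)
    qed
    have E3: "\<forall>x. (e3 has_real_derivative e4 x) (at x)"
    proof
      fix x show "(e3 has_real_derivative e4 x) (at x)"
        using refl_deriv[OF D3, of "-1" x] by (simp add: e3_def e4_def)
    qed
    have CE4: "continuous_on UNIV e4" unfolding e4_def
      by (rule continuous_on_compose2[OF C4]) (auto intro!: continuous_intros)
    have ev: "\<forall>x. e0 (- x) = e0 x" using W(3) by (simp add: e0_def)
    have lim: "(Q1 \<longlongrightarrow> Q1 0) (at_right 0)"
    proof -
      have "(radius1 r \<longlongrightarrow> radius1 r pi) (at_left pi)"
      proof (rule Lim_transform_eventually[OF W(5)])
        have "eventually (\<lambda>x. 0 < x \<and> x < pi) (at_left pi)"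
          using pi_gt_zero by (auto simp: eventually_at_left_field intro!: exI[of _ 0])
        then show "\<forall>\<^sub>F x in at_left pi. radius1_inner r x = radius1 r x"
          by eventually_elim (auto simp: radius1_def)
      qed
      then show ?thesis unfolding Q1_def using left_pi[of "radius1 r"] by simp
    qed
    have *: "\<forall>\<mu>::ereal. ((\<lambda>u. ereal ((Q2 u - Q2 0) / (Q1 u - Q1 0))) \<longlongrightarrow> \<mu>) (at_right 0) \<longrightarrow> \<mu> \<ge> 3"
    proof (rule core[OF E0 E1 E2 E3 CE4 ev _ _ lim])
      show "\<forall>u. 0 < u \<and> u < pi \<longrightarrow> Q1 u = e0 u + e1 u * cos u / sin u"
        using R1in by (auto simp: Q1_def e0_def e1_def)
      show "\<forall>u. 0 < u \<and> u < pi \<longrightarrow> Q2 u = e2 u + e0 u"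
        using R2e by (auto simp: Q2_def e0_def e2_def)
      show "Q2 0 = Q1 0" using assms(3) unfolding isolated_umbilic_at_pi_def astigmatism_def Q1_def Q2_def by simp
      obtain \<epsilon> where "\<epsilon> > 0" "\<forall>\<theta>. pi - \<epsilon> < \<theta> \<and> \<theta> < pi \<longrightarrow> astigmatism r \<theta> \<noteq> 0"
        using assms(3) unfolding isolated_umbilic_at_pi_def by blast
      then show "\<exists>\<epsilon>>0. \<forall>u. 0 < u \<and> u < \<epsilon> \<longrightarrow> Q2 u - Q1 u \<noteq> 0"
        by (intro exI[of _ \<epsilon>]) (auto simp: Q1_def Q2_def astigmatism_def)
    qed
    show ?thesis
    proof (intro allI impI)
      fix \<mu> :: ereal assume "((\<lambda>\<theta>. ereal (slope_quotient r pi \<theta>)) \<longlongrightarrow> \<mu>) (at_left pi)"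
      from left_pi[OF this] have "((\<lambda>u. ereal ((Q2 u - Q2 0) / (Q1 u - Q1 0))) \<longlongrightarrow> \<mu>) (at_right 0)"
        by (simp add: slope_quotient_def Q1_def Q2_def)
      with * show "\<mu> \<ge> 3" by blast
    qed
  qed
  show ?thesis using part0 partpi by blast
qed

end
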